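(* Fix $\theta_{01}\in\mathbb{R}$ and positive integers $J,L$. A structural parameter consists of $\sigma_{U^*}^2\ge0$; for $j=1,\dots,J$: weights $p_{V^*,j}>0$ with $\sum_j p_{V^*,j}=1$, means $\mu_{V^*,j}$ with $\sum_j p_{V^*,j}\mu_{V^*,j}=0$, and $\sigma_{V^*,j}^2\ge0$, $\sigma_{U^*V^*,j}$ with $\sigma_{U^*V^*,j}^2\le\sigma_{U^*}^2\sigma_{V^*,j}^2$; for $\ell=1,\dots,L$: weights $p_{\varepsilon,\ell}>0$ with $\sum_\ell p_{\varepsilon,\ell}=1$, means $\mu_{\varepsilon,\ell}$ with $\sum_\ell p_{\varepsilon,\ell}\mu_{\varepsilon,\ell}=0$, and $\sigma_{\varepsilon,\ell}^2\ge 0$. Such a parameter induces the distribution of $(U,V)$ equal to the mixture, with weights $p_{V^*,j}p_{\varepsilon,\ell}$, of bivariate normals with means $(-\theta_{01}\mu_{\varepsilon,\ell},\ \mu_{V^*,j}+\mu_{\varepsilon,\ell})'$ and covariance matrices $\Sigma_{UV,j\ell}$ with entries $$\sigma_{U,j\ell}^2=\sigma_{U^*}^2+\theta_{01}^2\sigma_{\varepsilon,\ell}^2,\quad \sigma_{V,j\ell}^2=\sigma_{V^*,j}^2+\sigma_{\varepsilon,\ell}^2,\quad \sigma_{UV,j\ell}=\sigma_{U^*V^*,j}-\theta_{01}\sigma_{\varepsilon,\ell}^2 .$$ Fix a true structural parameter whose induced matrices $\Sigma_{UV,j\ell}$ are all positive definite, and for each $(j,\ell)$ let $\mathcal{I}_{j\ell}=[\underline{\sigma}_{U^*,j\ell}^2,\sigma_{U,j\ell}^2]$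 with $$\underline{\sigma}_{U^*,j\ell}^2=\max\left\{\frac{(\theta_{01}\sigma_{UV,j\ell}+\sigma_{U,j\ell}^2)^2}{\sigma_{V,j\ell}^2\theta_{01}^2+2\sigma_{UV,j\ell}\theta_{01}+\sigma_{U,j\ell}^2},\ \sigma_{U,j\ell}^2-\theta_{01}^2\sigma_{V,j\ell}^2\right\},$$ and $\mathcal{I}=\bigcap_{j,\ell}\mathcal{I}_{j\ell}=[\max_{j,\ell}\underline{\sigma}_{U^*,j\ell}^2,\ \min_{j,\ell}\sigma_{U,j\ell}^2]$. Then $\mathcal{I}$ is the sharp identified set for $\sigma_{U^*}^2$: (i) the value of $\sigma_{U^*}^2$ in any structural parameter (with any numbers of components) inducing the same distribution of $(U,V)$ as the true one lies in $\mathcal{I}$; and (ii) for every $\sigma_{U^*}^2\in\mathcal{I}$ there exists a structural parameter with this value of $\sigma_{U^*}^2$ (and the same $J$, $L$, weights and means as the true one) that induces the same distribution of $(U,V)$ as the true structural parameter. *)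

theory Defs
  imports "HOL-Probability.Probability"
begin

text \<open>Structural parameter. Components j = 1..J are represented by indices 0..J-1,
  components l = 1..L by indices 0..L-1; values at other indices are irrelevant.\<close>
record sparam =
  sU2  :: real
  pV   :: "nat \<Rightarrow> real"
  muV  :: "nat \<Rightarrow> real"
  sV2  :: "nat \<Rightarrow> real"
  sUV  :: "nat \<Rightarrow> real"
  pe   :: "nat \<Rightarrow> real"
  mue  :: "nat \<Rightarrow> real"
  se2  :: "nat \<Rightarrow> real"

definition valid_param :: "nat \<Rightarrow> nat \<Rightarrow> sparam \<Rightarrow> bool" where
  "valid_param J L P \<longleftrightarrow> 0 < J \<and> 0 < L \<and> sU2 P \<ge> 0 \<and>
     (\<forall>j<J. pV P j > 0 \<and> sV2 P j \<ge> 0 \<and> (sUV P j)\<^sup>2 \<le> sU2 P * sV2 P j) \<and>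
     (\<Sum>j<J. pV P j) = 1 \<and> (\<Sum>j<J. pV P j * muV P j) = 0 \<and>
     (\<forall>l<L. pe P l > 0 \<and> se2 P l \<ge> 0) \<and>
     (\<Sum>l<L. pe P l) = 1 \<and> (\<Sum>l<L. pe P l * mue P l) = 0"

definition sigU2 :: "real \<Rightarrow> sparam \<Rightarrow> nat \<Rightarrow> nat \<Rightarrow> real" where
  "sigU2 \<theta> P j l = sU2 P + \<theta>\<^sup>2 * se2 P l"
definition sigV2 :: "real \<Rightarrow> sparam \<Rightarrow> nat \<Rightarrow> nat \<Rightarrow> real" where
  "sigV2 \<theta> P j l = sV2 P j + se2 P l"
definition sigUV :: "real \<Rightarrow> sparam \<Rightarrow> nat \<Rightarrow> nat \<Rightarrow> real" where
  "sigUV \<theta> P j l = sUV P j - \<theta> * se2 P l"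

definition pos_def2 :: "real \<Rightarrow> real \<Rightarrow> real \<Rightarrow> bool" where
  "pos_def2 a b c \<longleftrightarrow> (\<forall>x y. (x, y) \<noteq> (0, 0) \<longrightarrow> a * x\<^sup>2 + 2 * b * x * y + c * y\<^sup>2 > 0)"

text \<open>Bivariate normal distribution N((m1,m2), [[s11,s12],[s12,s22]]) for a positive
  semidefinite covariance matrix, realised as the law of m + A Z with Z a pair of
  independent standard normals and A the (lower triangular) Cholesky factor.\<close>
definition std_normal2 :: "(real \<times> real) measure" where
  "std_normal2 = density lborel std_normal_density \<Otimes>\<^sub>M density lborel std_normal_density"

definition bvn :: "real \<Rightarrow> real \<Rightarrow> real \<Rightarrow> real \<Rightarrow> real \<Rightarrow> (real \<times> real) measure" where
  "bvn m1 m2 s11 s12 s22 =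
     (let a = sqrt s11; b = (if a = 0 then 0 else s12 / a); c = sqrt (s22 - b\<^sup>2)
      in distr std_normal2 borel (\<lambda>(z1, z2). (m1 + a * z1, m2 + b * z1 + c * z2)))"

definition induced_prob :: "real \<Rightarrow> nat \<Rightarrow> nat \<Rightarrow> sparam \<Rightarrow> (real \<times> real) set \<Rightarrow> real" where
  "induced_prob \<theta> J L P A =
     (\<Sum>j<J. \<Sum>l<L. pV P j * pe P l *
        measure (bvn (- \<theta> * mue P l) (muV P j + mue P l)
                     (sigU2 \<theta> P j l) (sigUV \<theta> P j l) (sigV2 \<theta> P j l)) A)"

definition same_dist :: "real \<Rightarrow> nat \<Rightarrow> nat \<Rightarrow> sparam \<Rightarrow> nat \<Rightarrow> nat \<Rightarrow> sparam \<Rightarrow> bool" where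
  "same_dist \<theta> J L P J' L' P' \<longleftrightarrow>
     (\<forall>A \<in> sets (borel :: (real \<times> real) measure). induced_prob \<theta> J L P A = induced_prob \<theta> J' L' P' A)"

definition lowU :: "real \<Rightarrow> sparam \<Rightarrow> nat \<Rightarrow> nat \<Rightarrow> real" where
  "lowU \<theta> P j l = max
     ((\<theta> * sigUV \<theta> P j l + sigU2 \<theta> P j l)\<^sup>2 /
        (sigV2 \<theta> P j l * \<theta>\<^sup>2 + 2 * sigUV \<theta> P j l * \<theta> + sigU2 \<theta> P j l))
     (sigU2 \<theta> P j l - \<theta>\<^sup>2 * sigV2 \<theta> P j l)"

definition ident_set :: "real \<Rightarrow> nat \<Rightarrow> nat \<Rightarrow> sparam \<Rightarrow> real set" where
  "ident_set \<theta> J L P = (\<Inter>j\<in>{..<J}. \<Inter>l\<in>{..<L}. {lowU \<theta> P j l .. sigU2 \<theta> P j l})"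

end

theory Submission imports Defs "HOL-Computational_Algebra.Polynomial" begin

lemma prob_space_std_normal2: "prob_space std_normal2"
  unfolding std_normal2_def
  by (intro prob_space_pair prob_space_normal_density) simp_all

lemma sets_std_normal2[measurable_cong]: "sets std_normal2 = sets (borel :: (real \<times> real) measure)"
proof -
  have "sets std_normal2 = sets ((borel::real measure) \<Otimes>\<^sub>M (borel::real measure))"
    unfolding std_normal2_def by (rule sets_pair_measure_cong) simp_all
  then show ?thesis by (simp only: borel_prod)
qed

lemma bvn_meas: "(\<lambda>(z1::real, z2::real). (m1 + a * z1, m2 + b * z1 + c * z2)) \<in> std_normal2 \<rightarrow>\<^sub>M borel"
proof -
  have "(\<lambda>(z1::real, z2::real). (m1 + a * z1, m2 + b * z1 + c * z2)) \<in> borel_measurable borel"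
    unfolding case_prod_unfold
    by (intro borel_measurable_continuous_onI continuous_intros)
  then show ?thesis by (simp add: measurable_cong_sets[OF sets_std_normal2 refl])
qed

lemma prob_space_bvn: "prob_space (bvn m1 m2 s11 s12 s22)"
  unfolding bvn_def Let_def
  by (intro prob_space.prob_space_distr prob_space_std_normal2 bvn_meas)

lemma sets_bvn[simp, measurable_cong]: "sets (bvn m1 m2 s11 s12 s22) = sets borel"
  unfolding bvn_def Let_def by simp

lemma std_normal_shift: "std_normal_density z * exp (a * z) = normal_density a 1 z * exp (a\<^sup>2/2)"
proof -
  have "- z\<^sup>2 / 2 + a * z = - (z - a)\<^sup>2 / 2 + a\<^sup>2/2" by (simp add: power2_eq_square field_simps)
  then show ?thesis
    unfolding std_normal_density_def normal_density_def
    by (simp add: exp_add[symmetric])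
qed

lemma mgf_std: "(\<integral>\<^sup>+z. ennreal (exp (a * z)) \<partial>density lborel std_normal_density) = ennreal (exp (a\<^sup>2/2))"
proof -
  have "(\<integral>\<^sup>+z. ennreal (exp (a * z)) \<partial>density lborel std_normal_density)
      = (\<integral>\<^sup>+z. ennreal (std_normal_density z) * ennreal (exp (a * z)) \<partial>lborel)"
    by (rule nn_integral_density) simp_all
  also have "\<dots> = (\<integral>\<^sup>+z. ennreal (normal_density a 1 z) * ennreal (exp (a\<^sup>2/2)) \<partial>lborel)"
    by (intro nn_integral_cong) (simp add: ennreal_mult[symmetric] std_normal_shift)
  also have "\<dots> = (\<integral>\<^sup>+z. ennreal (normal_density a 1 z) \<partial>lborel) * ennreal (exp (a\<^sup>2/2))"
    by (rule nn_integral_multc) simp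
  also have "(\<integral>\<^sup>+z. ennreal (normal_density a 1 z) \<partial>lborel) = 1"
    by (subst nn_integral_eq_integral) simp_all
  finally show ?thesis by simp
qed

lemma mgf_std2:
  "(\<integral>\<^sup>+z. ennreal (exp (a * fst z + b * snd z)) \<partial>std_normal2) = ennreal (exp (a\<^sup>2/2 + b\<^sup>2/2))"
proof -
  let ?N = "density lborel std_normal_density"
  interpret N: prob_space ?N by (intro prob_space_normal_density) simp
  interpret NN: pair_sigma_finite ?N ?N by unfold_locales
  have "(\<integral>\<^sup>+z. ennreal (exp (a * fst z + b * snd z)) \<partial>std_normal2)
      = (\<integral>\<^sup>+x. \<integral>\<^sup>+y. ennreal (exp (a * fst (x,y) + b * snd (x,y))) \<partial>?N \<partial>?N)"
    unfolding std_normal2_def by (rule N.nn_integral_fst[symmetric]) simp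
  also have "\<dots> = (\<integral>\<^sup>+x. ennreal (exp (a * x)) * ennreal (exp (b\<^sup>2/2)) \<partial>?N)"
  proof (intro nn_integral_cong)
    fix x
    have "(\<integral>\<^sup>+y. ennreal (exp (a * fst (x,y) + b * snd (x,y))) \<partial>?N)
        = (\<integral>\<^sup>+y. ennreal (exp (a * x)) * ennreal (exp (b * y)) \<partial>?N)"
      by (intro nn_integral_cong) (simp add: ennreal_mult[symmetric] exp_add)
    also have "\<dots> = ennreal (exp (a * x)) * ennreal (exp (b\<^sup>2/2))"
      by (subst nn_integral_cmult) (simp_all add: mgf_std)
    finally show "(\<integral>\<^sup>+y. ennreal (exp (a * fst (x,y) + b * snd (x,y))) \<partial>?N)
        = ennreal (exp (a * x)) * ennreal (exp (b\<^sup>2/2))" .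
  qed
  also have "\<dots> = ennreal (exp (a\<^sup>2/2)) * ennreal (exp (b\<^sup>2/2))"
    by (subst nn_integral_multc) (simp_all add: mgf_std)
  finally show ?thesis by (simp add: ennreal_mult[symmetric] exp_add)
qed

lemma chol_facts:
  fixes s11 s12 s22 :: real
  assumes "0 \<le> s11" "0 \<le> s22" "s12\<^sup>2 \<le> s11 * s22"
  defines "a \<equiv> sqrt s11"
  defines "b \<equiv> (if a = 0 then 0 else s12 / a)"
  shows "a\<^sup>2 = s11" "a * b = s12" "b\<^sup>2 \<le> s22"
proof -
  show "a\<^sup>2 = s11" using assms(1) by (simp add: a_def)
  show "a * b = s12"
  proof (cases "a = 0")
    case True
    then have "s11 = 0" using assms(1) by (simp add: a_def)
    then have "s12 = 0" using assms(3) by simp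
    then show ?thesis using True by (simp add: b_def)
  next
    case False then show ?thesis by (simp add: b_def)
  qed
  show "b\<^sup>2 \<le> s22"
  proof (cases "a = 0")
    case True then show ?thesis using assms(2) by (simp add: b_def)
  next
    case False
    then have "s11 > 0" using assms(1) by (simp add: a_def)
    have "b\<^sup>2 = s12\<^sup>2 / s11" using False assms(1) by (simp add: b_def a_def power_divide)
    also have "\<dots> \<le> s22" using \<open>s11 > 0\<close> assms(3) by (simp add: divide_le_eq mult.commute)
    finally show ?thesis .
  qed
qed

lemma mgf_bvn:
  assumes "0 \<le> s11" "0 \<le> s22" "s12\<^sup>2 \<le> s11 * s22"
  shows "(\<integral>\<^sup>+z. ennreal (exp (u * fst z + v * snd z)) \<partial>bvn m1 m2 s11 s12 s22)
       = ennreal (exp (u * m1 + v * m2 + (u\<^sup>2 * s11 + 2 * u * v * s12 + v\<^sup>2 * s22) / 2))"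
proof -
  define a where "a = sqrt s11"
  define b where "b = (if a = 0 then 0 else s12 / a)"
  define c where "c = sqrt (s22 - b\<^sup>2)"
  have f: "a\<^sup>2 = s11" "a * b = s12" "b\<^sup>2 \<le> s22"
    using chol_facts[OF assms] unfolding a_def b_def by auto
  have c2: "c\<^sup>2 = s22 - b\<^sup>2" using f(3) by (simp add: c_def)
  have meas_exp: "(\<lambda>z::real\<times>real. ennreal (exp (u * fst z + v * snd z))) \<in> borel_measurable borel"
    by (intro measurable_compose[OF _ measurable_ennreal] borel_measurable_continuous_onI continuous_intros)
  have bvn_eq: "bvn m1 m2 s11 s12 s22 = distr std_normal2 borel (\<lambda>(z1, z2). (m1 + a * z1, m2 + b * z1 + c * z2))"
    unfolding bvn_def Let_def a_def b_def c_def by simp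
  have "(\<integral>\<^sup>+z. ennreal (exp (u * fst z + v * snd z)) \<partial>bvn m1 m2 s11 s12 s22)
     = (\<integral>\<^sup>+z. ennreal (exp (u * fst ((\<lambda>(z1, z2). (m1 + a * z1, m2 + b * z1 + c * z2)) z)
          + v * snd ((\<lambda>(z1, z2). (m1 + a * z1, m2 + b * z1 + c * z2)) z))) \<partial>std_normal2)"
    unfolding bvn_eq by (rule nn_integral_distr[OF bvn_meas])
      (subst measurable_cong_sets[OF sets_distr refl], rule meas_exp)
  also have "\<dots> = (\<integral>\<^sup>+z. ennreal (exp (u * m1 + v * m2)) *
        ennreal (exp ((u * a + v * b) * fst z + (v * c) * snd z)) \<partial>std_normal2)"
    by (intro nn_integral_cong) (auto simp: ennreal_mult[symmetric] exp_add[symmetric] algebra_simps split: prod.splits)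
  also have "\<dots> = ennreal (exp (u * m1 + v * m2)) * ennreal (exp ((u * a + v * b)\<^sup>2/2 + (v * c)\<^sup>2/2))"
    by (subst nn_integral_cmult) (simp_all add: mgf_std2 measurable_cong_sets[OF sets_std_normal2 refl],
      intro borel_measurable_continuous_onI continuous_intros)
  also have "(u * a + v * b)\<^sup>2/2 + (v * c)\<^sup>2/2 = (u\<^sup>2 * s11 + 2 * u * v * s12 + v\<^sup>2 * s22) / 2"
  proof -
    have "(u * a + v * b)\<^sup>2 + (v * c)\<^sup>2 = u\<^sup>2 * a\<^sup>2 + 2 * u * v * (a * b) + v\<^sup>2 * (b\<^sup>2 + c\<^sup>2)"
      by (simp add: power2_eq_square algebra_simps)
    then show ?thesis using f c2 by simp
  qed
  finally show ?thesis by (simp add: ennreal_mult[symmetric] exp_add[symmetric])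
qed

lemma mix_nn_integral:
  fixes \<nu> \<mu> :: "'i \<Rightarrow> 'a measure" and w w' :: "'i \<Rightarrow> ennreal"
  assumes I: "finite I" "finite I'"
    and sI: "\<And>i. i \<in> I \<Longrightarrow> sets (\<nu> i) = sets M"
    and sI': "\<And>i. i \<in> I' \<Longrightarrow> sets (\<mu> i) = sets M"
    and eq: "\<And>A. A \<in> sets M \<Longrightarrow> (\<Sum>i\<in>I. w i * emeasure (\<nu> i) A) = (\<Sum>i\<in>I'. w' i * emeasure (\<mu> i) A)"
    and f: "f \<in> borel_measurable M"
  shows "(\<Sum>i\<in>I. w i * integral\<^sup>N (\<nu> i) f) = (\<Sum>i\<in>I'. w' i * integral\<^sup>N (\<mu> i) f)"
  using f
proof (induction rule: borel_measurable_induct)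
  case (cong f g)
  have "integral\<^sup>N (\<nu> i) f = integral\<^sup>N (\<nu> i) g" if "i \<in> I" for i
    using cong.hyps(3) sets_eq_imp_space_eq[OF sI[OF that]] by (intro nn_integral_cong) simp
  moreover have "integral\<^sup>N (\<mu> i) f = integral\<^sup>N (\<mu> i) g" if "i \<in> I'" for i
    using cong.hyps(3) sets_eq_imp_space_eq[OF sI'[OF that]] by (intro nn_integral_cong) simp
  ultimately show ?case using cong.IH by simp
next
  case (set A)
  have "integral\<^sup>N (\<nu> i) (indicator A) = emeasure (\<nu> i) A" if "i \<in> I" for i
    using sI[OF that] set by (intro nn_integral_indicator) simp
  moreover have "integral\<^sup>N (\<mu> i) (indicator A) = emeasure (\<mu> i) A" if "i \<in> I'" for i
    using sI'[OF that] set by (intro nn_integral_indicator) simp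
  ultimately show ?case using eq[OF set] by simp
next
  case (mult u c)
  have "(\<integral>\<^sup>+x. c * u x \<partial>\<nu> i) = c * integral\<^sup>N (\<nu> i) u" if "i \<in> I" for i
    using measurable_cong_sets[OF sI[OF that] refl, of "borel::ennreal measure"] mult.hyps(2) by (intro nn_integral_cmult) simp
  moreover have "(\<integral>\<^sup>+x. c * u x \<partial>\<mu> i) = c * integral\<^sup>N (\<mu> i) u" if "i \<in> I'" for i
    using measurable_cong_sets[OF sI'[OF that] refl, of "borel::ennreal measure"] mult.hyps(2) by (intro nn_integral_cmult) simp
  ultimately have "(\<Sum>i\<in>I. w i * (\<integral>\<^sup>+x. c * u x \<partial>\<nu> i)) = c * (\<Sum>i\<in>I. w i * integral\<^sup>N (\<nu> i) u)"
     "(\<Sum>i\<in>I'. w' i * (\<integral>\<^sup>+x. c * u x \<partial>\<mu> i)) = c * (\<Sum>i\<in>I'. w' i * integral\<^sup>N (\<mu> i) u)"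
    by (simp_all add: sum_distrib_left mult.left_commute)
  then show ?case using mult.IH by simp
next
  case (add u v)
  have "(\<integral>\<^sup>+x. v x + u x \<partial>\<nu> i) = integral\<^sup>N (\<nu> i) v + integral\<^sup>N (\<nu> i) u" if "i \<in> I" for i
    using measurable_cong_sets[OF sI[OF that] refl, of "borel::ennreal measure"] add.hyps(1,3) by (intro nn_integral_add) simp_all
  moreover have "(\<integral>\<^sup>+x. v x + u x \<partial>\<mu> i) = integral\<^sup>N (\<mu> i) v + integral\<^sup>N (\<mu> i) u" if "i \<in> I'" for i
    using measurable_cong_sets[OF sI'[OF that] refl, of "borel::ennreal measure"] add.hyps(1,3) by (intro nn_integral_add) simp_all
  ultimately have "(\<Sum>i\<in>I. w i * (\<integral>\<^sup>+x. v x + u x \<partial>\<nu> i)) = (\<Sum>i\<in>I. w i * integral\<^sup>N (\<nu> i) v) + (\<Sum>i\<in>I. w i * integral\<^sup>N (\<nu> i) u)"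
     "(\<Sum>i\<in>I'. w' i * (\<integral>\<^sup>+x. v x + u x \<partial>\<mu> i)) = (\<Sum>i\<in>I'. w' i * integral\<^sup>N (\<mu> i) v) + (\<Sum>i\<in>I'. w' i * integral\<^sup>N (\<mu> i) u)"
    by (simp_all add: sum.distrib distrib_left)
  then show ?case using add.IH by simp
next
  case (seq U)
  have mono: "\<And>N. incseq (\<lambda>n. integral\<^sup>N N (U n))"
    using seq.hyps(3) unfolding incseq_def le_fun_def by (intro allI impI nn_integral_mono) blast
  have mono2: "\<And>N c. incseq (\<lambda>n. c * integral\<^sup>N N (U n))"
    using mono unfolding incseq_def by (metis mult_left_mono zero_le)
  have A: "integral\<^sup>N (\<nu> i) (SUP n. U n) = (SUP n. integral\<^sup>N (\<nu> i) (U n))" if "i \<in> I" for i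
    unfolding SUP_apply[abs_def]
    using measurable_cong_sets[OF sI[OF that] refl, of "borel::ennreal measure"] seq.hyps(1,3) by (intro nn_integral_monotone_convergence_SUP) simp_all
  have B: "integral\<^sup>N (\<mu> i) (SUP n. U n) = (SUP n. integral\<^sup>N (\<mu> i) (U n))" if "i \<in> I'" for i
    unfolding SUP_apply[abs_def]
    using measurable_cong_sets[OF sI'[OF that] refl, of "borel::ennreal measure"] seq.hyps(1,3) by (intro nn_integral_monotone_convergence_SUP) simp_all
  have "(\<Sum>i\<in>I. w i * integral\<^sup>N (\<nu> i) (SUP n. U n)) = (\<Sum>i\<in>I. SUP n. w i * integral\<^sup>N (\<nu> i) (U n))"
    using A by (simp add: SUP_mult_left_ennreal)
  also have "\<dots> = (SUP n. \<Sum>i\<in>I. w i * integral\<^sup>N (\<nu> i) (U n))"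
    by (rule ennreal_SUP_sum[symmetric]) (rule mono2)
  also have "\<dots> = (SUP n. \<Sum>i\<in>I'. w' i * integral\<^sup>N (\<mu> i) (U n))"
    using seq.IH by simp
  also have "\<dots> = (\<Sum>i\<in>I'. SUP n. w' i * integral\<^sup>N (\<mu> i) (U n))"
    by (rule ennreal_SUP_sum) (rule mono2)
  also have "\<dots> = (\<Sum>i\<in>I'. w' i * integral\<^sup>N (\<mu> i) (SUP n. U n))"
    using B by (simp add: SUP_mult_left_ennreal)
  finally show ?case .
qed

lemma quad_to_bot:
  fixes d e :: real
  assumes "e < 0 \<or> (e = 0 \<and> d < 0)"
  shows "filterlim (\<lambda>x. x * d + x\<^sup>2 * e) at_bot at_top"
proof (cases "e < 0")
  case True
  have lim: "((\<lambda>x. e + d / x) \<longlongrightarrow> e + 0) at_top"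
    by (intro tendsto_intros tendsto_divide_0[OF tendsto_const] filterlim_at_top_imp_at_infinity filterlim_ident)
  have sq: "filterlim (\<lambda>x::real. x ^ 2) at_top at_top"
    by (intro filterlim_pow_at_top filterlim_ident) simp
  have fl: "filterlim (\<lambda>x. (e + d / x) * x ^ 2) at_bot at_top"
    using filterlim_tendsto_neg_mult_at_bot[OF lim _ sq] True by simp
  have ev: "eventually (\<lambda>x. (e + d / x) * x ^ 2 = x * d + x\<^sup>2 * e) at_top"
    using eventually_gt_at_top[of 0] by eventually_elim (simp add: power2_eq_square field_simps)
  show ?thesis using filterlim_cong[OF refl refl ev] fl by simp
next
  case False
  then have "e = 0" "d < 0" using assms by auto
  have "filterlim (\<lambda>x. d * x) at_bot at_top"
    by (rule filterlim_tendsto_neg_mult_at_bot[OF tendsto_const \<open>d < 0\<close> filterlim_ident])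
  then show ?thesis using \<open>e = 0\<close> by (simp add: mult.commute)
qed

lemma quad_exp_to0:
  fixes d e :: real
  assumes "e < 0 \<or> (e = 0 \<and> d < 0)"
  shows "((\<lambda>x. exp (x * d + x\<^sup>2 * e)) \<longlongrightarrow> 0) at_top"
  using filterlim_compose[OF exp_at_bot quad_to_bot[OF assms]] by simp

lemma exp_lin_indep:
  fixes S :: "(real \<times> real) set" and c :: "real \<times> real \<Rightarrow> real"
  assumes "finite S" "\<And>x. (\<Sum>q\<in>S. c q * exp (x * snd q + x\<^sup>2 * fst q)) = 0"
  shows "\<forall>q\<in>S. c q = 0"
  using assms
proof (induction "card S" arbitrary: S rule: less_induct)
  case less
  show ?case
  proof (cases "S = {}")
    case True then show ?thesis by simp
  next
    case False
    define b0 where "b0 = Max (fst ` S)"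
    have b0S: "b0 \<in> fst ` S" using False less.prems(1) unfolding b0_def by (intro Max_in) auto
    have b0max: "\<And>q. q \<in> S \<Longrightarrow> fst q \<le> b0" using less.prems(1) unfolding b0_def by auto
    define T where "T = {q \<in> S. fst q = b0}"
    have T: "finite T" "T \<noteq> {}" using b0S less.prems(1) unfolding T_def by auto
    define a0 where "a0 = Max (snd ` T)"
    have a0T: "a0 \<in> snd ` T" using T unfolding a0_def by (intro Max_in) auto
    have a0max: "\<And>q. q \<in> T \<Longrightarrow> snd q \<le> a0" using T unfolding a0_def by auto
    define p where "p = (b0, a0)"
    have pS: "p \<in> S" using a0T unfolding p_def T_def by force
    have lt: "fst q - b0 < 0 \<or> (fst q - b0 = 0 \<and> snd q - a0 < 0)" if "q \<in> S - {p}" for q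
    proof -
      have "fst q \<le> b0" using that b0max by auto
      moreover have "fst q = b0 \<Longrightarrow> snd q < a0"
      proof -
        assume "fst q = b0"
        then have "q \<in> T" using that unfolding T_def by auto
        then have "snd q \<le> a0" by (rule a0max)
        moreover have "q \<noteq> p" using that by auto
        ultimately show "snd q < a0" using \<open>fst q = b0\<close> unfolding p_def by (cases q) auto
      qed
      ultimately show ?thesis by fastforce
    qed
    define g where "g x = (\<Sum>q\<in>S - {p}. c q * exp (x * (snd q - a0) + x\<^sup>2 * (fst q - b0)))" for x
    have eq: "c p + g x = 0" for x
    proof -
      have "(\<Sum>q\<in>S. c q * exp (x * snd q + x\<^sup>2 * fst q)) =
            c p * exp (x * snd p + x\<^sup>2 * fst p) + (\<Sum>q\<in>S - {p}. c q * exp (x * snd q + x\<^sup>2 * fst q))"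
        using pS less.prems(1) by (simp add: sum.remove)
      also have "(\<Sum>q\<in>S - {p}. c q * exp (x * snd q + x\<^sup>2 * fst q)) = exp (x * a0 + x\<^sup>2 * b0) * g x"
        unfolding g_def sum_distrib_left
        by (intro sum.cong refl) (simp add: exp_add[symmetric] algebra_simps)
      finally have "exp (x * a0 + x\<^sup>2 * b0) * (c p + g x) = 0"
        using less.prems(2)[of x] by (simp add: p_def algebra_simps)
      then show ?thesis by simp
    qed
    have "(g \<longlongrightarrow> 0) at_top"
      unfolding g_def
      by (intro tendsto_null_sum tendsto_mult_right_zero quad_exp_to0 lt)
    moreover have "g = (\<lambda>x. - c p)"
    proof
      fix x show "g x = - c p" using eq[of x] by linarith
    qed
    ultimately have cp: "c p = 0" by (simp add: tendsto_const_iff)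
    have "\<forall>q\<in>S - {p}. c q = 0"
    proof (rule less.hyps)
      show "card (S - {p}) < card S" by (rule card_Diff1_less[OF less.prems(1) pS])
      show "finite (S - {p})" using less.prems(1) by simp
      fix x
      have "(\<Sum>q\<in>S. c q * exp (x * snd q + x\<^sup>2 * fst q)) =
            c p * exp (x * snd p + x\<^sup>2 * fst p) + (\<Sum>q\<in>S - {p}. c q * exp (x * snd q + x\<^sup>2 * fst q))"
        using pS less.prems(1) by (simp add: sum.remove)
      then show "(\<Sum>q\<in>S - {p}. c q * exp (x * snd q + x\<^sup>2 * fst q)) = 0"
        using less.prems(2)[of x] cp by simp
    qed
    then show ?thesis using cp by auto
  qed
qed

lemma regroup:
  fixes K :: "'k set" and w :: "'k \<Rightarrow> real" and pr :: "'k \<Rightarrow> real \<times> real"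
  assumes "finite K" "finite S" "pr ` K \<subseteq> S"
  shows "(\<Sum>k\<in>K. w k * E (pr k)) = (\<Sum>q\<in>S. (\<Sum>k\<in>{k\<in>K. pr k = q}. w k) * E q)"
proof -
  have "(\<Sum>k\<in>K. w k * E (pr k)) = (\<Sum>q\<in>S. \<Sum>k\<in>{k\<in>K. pr k = q}. w k * E (pr k))"
    using sum.group[OF assms, of "\<lambda>k. w k * E (pr k)"] by simp
  also have "\<dots> = (\<Sum>q\<in>S. (\<Sum>k\<in>{k\<in>K. pr k = q}. w k) * E q)"
    by (intro sum.cong refl) (simp add: sum_distrib_right)
  finally show ?thesis .
qed

lemma match_component:
  fixes K0 :: "'k set" and K1 :: "'m set" and w0 a0 b0 :: "'k \<Rightarrow> real" and w1 a1 b1 :: "'m \<Rightarrow> real"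
  assumes fin: "finite K0" "finite K1"
    and pos: "\<And>k. k \<in> K0 \<Longrightarrow> w0 k > 0"
    and eq: "\<And>x. (\<Sum>k\<in>K1. w1 k * exp (x * a1 k + x\<^sup>2 * b1 k)) = (\<Sum>k\<in>K0. w0 k * exp (x * a0 k + x\<^sup>2 * b0 k))"
    and k0: "k0 \<in> K0"
  shows "\<exists>k1\<in>K1. a1 k1 = a0 k0 \<and> b1 k1 = b0 k0"
proof -
  define pr1 where "pr1 k = (b1 k, a1 k)" for k
  define pr0 where "pr0 k = (b0 k, a0 k)" for k
  define S where "S = pr1 ` K1 \<union> pr0 ` K0"
  have fS: "finite S" using fin unfolding S_def by simp
  define C where "C q = (\<Sum>k\<in>{k\<in>K1. pr1 k = q}. w1 k) - (\<Sum>k\<in>{k\<in>K0. pr0 k = q}. w0 k)" for q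
  define E where "E x q = exp (x * snd q + x\<^sup>2 * fst q)" for x :: real and q :: "real \<times> real"
  have "\<forall>q\<in>S. C q = 0"
  proof (rule exp_lin_indep[OF fS])
    fix x
    have "(\<Sum>k\<in>K1. w1 k * E x (pr1 k)) = (\<Sum>q\<in>S. (\<Sum>k\<in>{k\<in>K1. pr1 k = q}. w1 k) * E x q)"
      by (rule regroup) (use fin fS in \<open>auto simp: S_def\<close>)
    moreover have "(\<Sum>k\<in>K0. w0 k * E x (pr0 k)) = (\<Sum>q\<in>S. (\<Sum>k\<in>{k\<in>K0. pr0 k = q}. w0 k) * E x q)"
      by (rule regroup) (use fin fS in \<open>auto simp: S_def\<close>)
    moreover have "(\<Sum>k\<in>K1. w1 k * E x (pr1 k)) = (\<Sum>k\<in>K0. w0 k * E x (pr0 k))"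
      using eq[of x] by (simp add: E_def pr1_def pr0_def)
    ultimately have "(\<Sum>q\<in>S. C q * E x q) = 0"
      unfolding C_def by (simp add: left_diff_distrib sum_subtractf)
    then show "(\<Sum>q\<in>S. C q * exp (x * snd q + x\<^sup>2 * fst q)) = 0" by (simp add: E_def)
  qed
  moreover have "pr0 k0 \<in> S" using k0 by (simp add: S_def)
  ultimately have C0: "C (pr0 k0) = 0" by blast
  have "(\<Sum>k\<in>{k\<in>K0. pr0 k = pr0 k0}. w0 k) \<ge> w0 k0"
    using fin k0 pos by (intro member_le_sum) (auto intro: less_imp_le)
  then have "(\<Sum>k\<in>{k\<in>K1. pr1 k = pr0 k0}. w1 k) \<noteq> 0"
    using C0 pos[OF k0] unfolding C_def by linarith
  then obtain k1 where "k1 \<in> K1" "pr1 k1 = pr0 k0"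
    by (metis (mono_tags, lifting) empty_Collect_eq sum.empty)
  then show ?thesis by (auto simp: pr1_def pr0_def)
qed

definition qf :: "real \<times> real \<times> real \<Rightarrow> real \<Rightarrow> real" where
  "qf t y = fst t + 2 * y * fst (snd t) + y\<^sup>2 * snd (snd t)"

lemma qf_roots_finite:
  assumes "t \<noteq> t'"
  shows "finite {y. qf t y = qf t' y}"
proof -
  obtain a b c where t: "t = (a, b, c)" by (cases t) auto
  obtain a' b' c' where t': "t' = (a', b', c')" by (cases t') auto
  define p where "p = [:a - a', 2 * (b - b'), c - c':]"
  have "p \<noteq> 0" using assms unfolding p_def t t' by auto
  then have "finite {y. poly p y = 0}" by (rule poly_roots_finite)
  moreover have "{y. qf t y = qf t' y} = {y. poly p y = 0}"
    unfolding p_def t t' qf_def by (auto simp: power2_eq_square algebra_simps)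
  ultimately show ?thesis by simp
qed

lemma generic_y:
  assumes "finite A" "finite B"
  shows "\<exists>y. \<forall>t\<in>A. \<forall>t'\<in>B. t \<noteq> t' \<longrightarrow> qf t y \<noteq> qf t' y"
proof -
  define Z where "Z = (\<Union>t\<in>A. \<Union>t'\<in>B. if t = t' then {} else {y. qf t y = qf t' y})"
  have "finite Z" unfolding Z_def using assms qf_roots_finite by auto
  then obtain y where "y \<notin> Z" using ex_new_if_finite[OF infinite_UNIV_char_0] by blast
  then show ?thesis unfolding Z_def by fastforce
qed

lemma fm_bvn: "finite_measure (bvn m1 m2 s11 s12 s22)"
  using prob_space_bvn by (simp add: prob_space_def)

lemma valid_psd:
  assumes "valid_param J L P" "j < J" "l < L"
  shows "0 \<le> sigU2 \<theta> P j l" "0 \<le> sigV2 \<theta> P j l"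
    "(sigUV \<theta> P j l)\<^sup>2 \<le> sigU2 \<theta> P j l * sigV2 \<theta> P j l"
proof -
  define s where "s = sU2 P"
  define v where "v = sV2 P j"
  define w where "w = sUV P j"
  define e where "e = se2 P l"
  have h: "0 \<le> s" "0 \<le> v" "w\<^sup>2 \<le> s * v" "0 \<le> e"
    using assms unfolding valid_param_def s_def v_def w_def e_def by auto
  show "0 \<le> sigU2 \<theta> P j l" using h unfolding sigU2_def s_def[symmetric] e_def[symmetric] by simp
  show "0 \<le> sigV2 \<theta> P j l" using h unfolding sigV2_def v_def[symmetric] e_def[symmetric] by simp
  have key: "0 \<le> s + 2 * \<theta> * w + \<theta>\<^sup>2 * v"
  proof (cases "s = 0")
    case True
    then have "w = 0" using h(3) by simp
    then show ?thesis using True h(2) by simp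
  next
    case False
    then have "s > 0" using h(1) by simp
    have "s * (s + 2 * \<theta> * w + \<theta>\<^sup>2 * v) = (s + \<theta> * w)\<^sup>2 + \<theta>\<^sup>2 * (s * v - w\<^sup>2)"
      by (simp add: power2_eq_square algebra_simps)
    also have "\<dots> \<ge> 0" using h(3) by simp
    finally show ?thesis using \<open>s > 0\<close> by (simp add: zero_le_mult_iff)
  qed
  have "(s + \<theta>\<^sup>2 * e) * (v + e) - (w - \<theta> * e)\<^sup>2 = (s * v - w\<^sup>2) + e * (s + 2 * \<theta> * w + \<theta>\<^sup>2 * v)"
    by (simp add: power2_eq_square algebra_simps)
  also have "\<dots> \<ge> 0" using h key by simp
  finally show "(sigUV \<theta> P j l)\<^sup>2 \<le> sigU2 \<theta> P j l * sigV2 \<theta> P j l"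
    unfolding sigU2_def sigV2_def sigUV_def s_def[symmetric] v_def[symmetric] w_def[symmetric] e_def[symmetric]
    by simp
qed

definition nu :: "real \<Rightarrow> sparam \<Rightarrow> nat \<times> nat \<Rightarrow> (real \<times> real) measure" where
  "nu \<theta> P k = bvn (- \<theta> * mue P (snd k)) (muV P (fst k) + mue P (snd k))
     (sigU2 \<theta> P (fst k) (snd k)) (sigUV \<theta> P (fst k) (snd k)) (sigV2 \<theta> P (fst k) (snd k))"

definition wt :: "sparam \<Rightarrow> nat \<times> nat \<Rightarrow> real" where
  "wt P k = pV P (fst k) * pe P (snd k)"

definition tri :: "real \<Rightarrow> sparam \<Rightarrow> nat \<times> nat \<Rightarrow> real \<times> real \<times> real" where
  "tri \<theta> P k = (sigU2 \<theta> P (fst k) (snd k), sigUV \<theta> P (fst k) (snd k), sigV2 \<theta> P (fst k) (snd k))"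

lemma induced_prob_alt:
  "induced_prob \<theta> J L P A = (\<Sum>k\<in>{..<J}\<times>{..<L}. wt P k * measure (nu \<theta> P k) A)"
  unfolding induced_prob_def sum.cartesian_product wt_def nu_def
  by (intro sum.cong refl) auto

lemma wt_nonneg: "valid_param J L P \<Longrightarrow> k \<in> {..<J}\<times>{..<L} \<Longrightarrow> 0 \<le> wt P k"
  unfolding valid_param_def wt_def by (cases k) (auto intro!: mult_nonneg_nonneg less_imp_le)

lemma wt_pos: "valid_param J L P \<Longrightarrow> k \<in> {..<J}\<times>{..<L} \<Longrightarrow> 0 < wt P k"
  unfolding valid_param_def wt_def by (cases k) auto

lemma emeasure_sum_eq:
  assumes "valid_param J L P"
  shows "ennreal (induced_prob \<theta> J L P A) = (\<Sum>k\<in>{..<J}\<times>{..<L}. ennreal (wt P k) * emeasure (nu \<theta> P k) A)"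
proof -
  have "ennreal (induced_prob \<theta> J L P A) = (\<Sum>k\<in>{..<J}\<times>{..<L}. ennreal (wt P k * measure (nu \<theta> P k) A))"
    unfolding induced_prob_alt
    by (rule sum_ennreal[symmetric]) (use wt_nonneg[OF assms] in auto)
  also have "\<dots> = (\<Sum>k\<in>{..<J}\<times>{..<L}. ennreal (wt P k) * emeasure (nu \<theta> P k) A)"
    using wt_nonneg[OF assms]
    by (intro sum.cong refl)
       (simp add: ennreal_mult nu_def finite_measure.emeasure_eq_measure[OF fm_bvn])
  finally show ?thesis .
qed

lemma mgf_nu:
  assumes "valid_param J L P" "k \<in> {..<J}\<times>{..<L}"
  shows "(\<integral>\<^sup>+z. ennreal (exp (x * fst z + (x * y) * snd z)) \<partial>nu \<theta> P k)
    = ennreal (exp (x * ((- \<theta> * mue P (snd k)) + y * (muV P (fst k) + mue P (snd k))) + x\<^sup>2 * (qf (tri \<theta> P k) y / 2)))"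
proof -
  have psd: "0 \<le> sigU2 \<theta> P (fst k) (snd k)" "0 \<le> sigV2 \<theta> P (fst k) (snd k)"
    "(sigUV \<theta> P (fst k) (snd k))\<^sup>2 \<le> sigU2 \<theta> P (fst k) (snd k) * sigV2 \<theta> P (fst k) (snd k)"
    using valid_psd[OF assms(1)] assms(2) by auto
  show ?thesis
    unfolding nu_def mgf_bvn[OF psd]
    by (simp add: qf_def tri_def power2_eq_square algebra_simps add_divide_distrib)
qed

lemma bounds_alg:
  fixes s v e w a b c \<theta> :: real
  assumes "0 \<le> s" "0 \<le> v" "0 \<le> e" "w\<^sup>2 \<le> s * v"
    and "a = s + \<theta>\<^sup>2 * e" "b = w - \<theta> * e" "c = v + e"
    and pd: "a + 2 * b * \<theta> + c * \<theta>\<^sup>2 > 0"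
  shows "max ((\<theta> * b + a)\<^sup>2 / (c * \<theta>\<^sup>2 + 2 * b * \<theta> + a)) (a - \<theta>\<^sup>2 * c) \<le> s" "s \<le> a"
proof -
  show "s \<le> a" using assms by simp
  have D: "c * \<theta>\<^sup>2 + 2 * b * \<theta> + a = s + 2 * \<theta> * w + \<theta>\<^sup>2 * v"
    unfolding assms(5,6,7) by (simp add: power2_eq_square algebra_simps)
  have N: "\<theta> * b + a = \<theta> * w + s" unfolding assms(5,6,7) by (simp add: power2_eq_square algebra_simps)
  have Dpos: "c * \<theta>\<^sup>2 + 2 * b * \<theta> + a > 0" using pd by (simp add: algebra_simps)
  have "s * (s + 2 * \<theta> * w + \<theta>\<^sup>2 * v) - (\<theta> * w + s)\<^sup>2 = \<theta>\<^sup>2 * (s * v - w\<^sup>2)"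
    by (simp add: power2_eq_square algebra_simps)
  also have "\<dots> \<ge> 0" using assms(4) by simp
  finally have "(\<theta> * b + a)\<^sup>2 \<le> s * (c * \<theta>\<^sup>2 + 2 * b * \<theta> + a)" unfolding D N by simp
  then have "(\<theta> * b + a)\<^sup>2 / (c * \<theta>\<^sup>2 + 2 * b * \<theta> + a) \<le> s" using Dpos by (simp add: divide_le_eq)
  moreover have "a - \<theta>\<^sup>2 * c \<le> s" using assms by (simp add: algebra_simps)
  ultimately show "max ((\<theta> * b + a)\<^sup>2 / (c * \<theta>\<^sup>2 + 2 * b * \<theta> + a)) (a - \<theta>\<^sup>2 * c) \<le> s" by simp
qed

lemma part_i:
  assumes v0: "valid_param J L P0"
    and pd: "\<forall>j<J. \<forall>l<L. pos_def2 (sigU2 \<theta> P0 j l) (sigUV \<theta> P0 j l) (sigV2 \<theta> P0 j l)"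
    and v1: "valid_param J' L' P" and sd: "same_dist \<theta> J' L' P J L P0"
  shows "sU2 P \<in> ident_set \<theta> J L P0"
proof -
  define K0 where "K0 = {..<J}\<times>{..<L}"
  define K1 where "K1 = {..<J'}\<times>{..<L'}"
  have fin: "finite K0" "finite K1" unfolding K0_def K1_def by auto
  have emeq: "(\<Sum>k\<in>K1. ennreal (wt P k) * emeasure (nu \<theta> P k) A)
      = (\<Sum>k\<in>K0. ennreal (wt P0 k) * emeasure (nu \<theta> P0 k) A)" if "A \<in> sets borel" for A
    using sd that emeasure_sum_eq[OF v1, of \<theta> A] emeasure_sum_eq[OF v0, of \<theta> A]
    unfolding same_dist_def K0_def K1_def by simp
  have intq: "(\<Sum>k\<in>K1. ennreal (wt P k) * integral\<^sup>N (nu \<theta> P k) f)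
      = (\<Sum>k\<in>K0. ennreal (wt P0 k) * integral\<^sup>N (nu \<theta> P0 k) f)" if "f \<in> borel_measurable borel" for f
    by (rule mix_nn_integral[OF fin(2,1) _ _ emeq that]) (simp_all add: nu_def)
  have match: "\<exists>k1\<in>K1. tri \<theta> P k1 = tri \<theta> P0 k0" if k0: "k0 \<in> K0" for k0
  proof -
    obtain y where y: "\<forall>t\<in>tri \<theta> P0 ` K0. \<forall>t'\<in>tri \<theta> P ` K1. t \<noteq> t' \<longrightarrow> qf t y \<noteq> qf t' y"
      using generic_y[of "tri \<theta> P0 ` K0" "tri \<theta> P ` K1"] fin by auto
    define al where "al Q k = (- \<theta> * mue Q (snd k)) + y * (muV Q (fst k) + mue Q (snd k))" for Q :: sparam and k :: "nat \<times> nat"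
    have eqx: "(\<Sum>k\<in>K1. wt P k * exp (x * al P k + x\<^sup>2 * (qf (tri \<theta> P k) y / 2)))
        = (\<Sum>k\<in>K0. wt P0 k * exp (x * al P0 k + x\<^sup>2 * (qf (tri \<theta> P0 k) y / 2)))" for x
    proof -
      have meas: "(\<lambda>z::real\<times>real. ennreal (exp (x * fst z + (x * y) * snd z))) \<in> borel_measurable borel"
        by (intro measurable_compose[OF _ measurable_ennreal] borel_measurable_continuous_onI continuous_intros)
      have "ennreal (\<Sum>k\<in>K1. wt P k * exp (x * al P k + x\<^sup>2 * (qf (tri \<theta> P k) y / 2)))
          = (\<Sum>k\<in>K1. ennreal (wt P k) * (\<integral>\<^sup>+z. ennreal (exp (x * fst z + (x * y) * snd z)) \<partial>nu \<theta> P k))"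
        by (subst sum_ennreal[symmetric])
           (auto simp: K1_def mgf_nu[OF v1] al_def ennreal_mult wt_nonneg[OF v1] intro!: sum.cong)
      also have "\<dots> = (\<Sum>k\<in>K0. ennreal (wt P0 k) * (\<integral>\<^sup>+z. ennreal (exp (x * fst z + (x * y) * snd z)) \<partial>nu \<theta> P0 k))"
        by (rule intq[OF meas])
      also have "\<dots> = ennreal (\<Sum>k\<in>K0. wt P0 k * exp (x * al P0 k + x\<^sup>2 * (qf (tri \<theta> P0 k) y / 2)))"
        by (subst sum_ennreal[symmetric])
           (auto simp: K0_def mgf_nu[OF v0] al_def ennreal_mult wt_nonneg[OF v0] intro!: sum.cong)
      finally show ?thesis
        by (subst (asm) ennreal_inj)
           (auto simp: K0_def K1_def intro!: sum_nonneg mult_nonneg_nonneg wt_nonneg[OF v0] wt_nonneg[OF v1])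
    qed
    obtain k1 where k1: "k1 \<in> K1" "qf (tri \<theta> P k1) y / 2 = qf (tri \<theta> P0 k0) y / 2"
      using match_component[OF fin(1,2), of "wt P0" "wt P" "al P" "\<lambda>k. qf (tri \<theta> P k) y / 2"
          "al P0" "\<lambda>k. qf (tri \<theta> P0 k) y / 2" k0] eqx wt_pos[OF v0] k0
      unfolding K0_def by blast
    then have "tri \<theta> P k1 = tri \<theta> P0 k0" using y k0 by force
    then show ?thesis using k1 by blast
  qed
  show ?thesis unfolding ident_set_def
  proof (intro InterI, clarify)
    fix j l assume jl: "j < J" "l < L"
    obtain k1 where k1: "k1 \<in> K1" "tri \<theta> P k1 = tri \<theta> P0 (j, l)"
      using match[of "(j,l)"] jl by (auto simp: K0_def)
    obtain j' l' where k1e: "k1 = (j', l')" by (cases k1)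
    have jl': "j' < J'" "l' < L'" using k1 k1e by (auto simp: K1_def)
    have h: "0 \<le> sU2 P" "0 \<le> sV2 P j'" "0 \<le> se2 P l'" "(sUV P j')\<^sup>2 \<le> sU2 P * sV2 P j'"
      using v1 jl' unfolding valid_param_def by auto
    have eqs: "sigU2 \<theta> P0 j l = sU2 P + \<theta>\<^sup>2 * se2 P l'" "sigUV \<theta> P0 j l = sUV P j' - \<theta> * se2 P l'"
      "sigV2 \<theta> P0 j l = sV2 P j' + se2 P l'"
      using k1(2) unfolding k1e tri_def sigU2_def sigUV_def sigV2_def by auto
    have "pos_def2 (sigU2 \<theta> P0 j l) (sigUV \<theta> P0 j l) (sigV2 \<theta> P0 j l)" using pd jl by auto
    then have pdj: "sigU2 \<theta> P0 j l + 2 * sigUV \<theta> P0 j l * \<theta> + sigV2 \<theta> P0 j l * \<theta>\<^sup>2 > 0"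
      unfolding pos_def2_def by (auto dest: spec[of _ 1] spec[of _ \<theta>])
    note B = bounds_alg[OF h(1,2,3,4) eqs pdj]
    show "sU2 P \<in> {lowU \<theta> P0 j l..sigU2 \<theta> P0 j l}"
      using B unfolding lowU_def by (simp add: mult.commute)
  qed
qed

lemma conv_alg:
  fixes s v e w a b c \<theta> :: real
  assumes "a = s + \<theta>\<^sup>2 * e" "b = w - \<theta> * e" "c = v + e"
    and pd: "a + 2 * b * \<theta> + c * \<theta>\<^sup>2 > 0"
    and low: "(\<theta> * b + a)\<^sup>2 / (c * \<theta>\<^sup>2 + 2 * b * \<theta> + a) \<le> s" and th: "\<theta> \<noteq> 0"
  shows "w\<^sup>2 \<le> s * v"
proof -
  have D: "c * \<theta>\<^sup>2 + 2 * b * \<theta> + a = s + 2 * \<theta> * w + \<theta>\<^sup>2 * v"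
    unfolding assms(1,2,3) by (simp add: power2_eq_square algebra_simps)
  have N: "\<theta> * b + a = \<theta> * w + s" unfolding assms(1,2,3) by (simp add: power2_eq_square algebra_simps)
  have Dpos: "c * \<theta>\<^sup>2 + 2 * b * \<theta> + a > 0" using pd by (simp add: algebra_simps)
  have "(\<theta> * b + a)\<^sup>2 \<le> s * (c * \<theta>\<^sup>2 + 2 * b * \<theta> + a)" using low Dpos by (simp add: divide_le_eq)
  then have "0 \<le> s * (s + 2 * \<theta> * w + \<theta>\<^sup>2 * v) - (\<theta> * w + s)\<^sup>2" unfolding D N by simp
  also have "s * (s + 2 * \<theta> * w + \<theta>\<^sup>2 * v) - (\<theta> * w + s)\<^sup>2 = \<theta>\<^sup>2 * (s * v - w\<^sup>2)"
    by (simp add: power2_eq_square algebra_simps)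
  finally have "0 \<le> \<theta>\<^sup>2 * (s * v - w\<^sup>2)" .
  moreover have "\<theta>\<^sup>2 > 0" using th by simp
  ultimately have "0 \<le> s * v - w\<^sup>2" by (simp add: zero_le_mult_iff)
  then show ?thesis by simp
qed

lemma pd_lin:
  assumes "pos_def2 a b c"
  shows "a + 2 * b * \<theta> + c * \<theta>\<^sup>2 > 0"
  using assms unfolding pos_def2_def by (auto dest: spec[of _ 1] spec[of _ \<theta>])

lemma part_ii:
  assumes v0: "valid_param J L P0"
    and pd: "\<forall>j<J. \<forall>l<L. pos_def2 (sigU2 \<theta> P0 j l) (sigUV \<theta> P0 j l) (sigV2 \<theta> P0 j l)"
    and sI: "s \<in> ident_set \<theta> J L P0"
  shows "\<exists>P. valid_param J L P \<and> sU2 P = s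
            \<and> (\<forall>j<J. pV P j = pV P0 j \<and> muV P j = muV P0 j)
            \<and> (\<forall>l<L. pe P l = pe P0 l \<and> mue P l = mue P0 l)
            \<and> same_dist \<theta> J L P J L P0"
proof -
  have JL: "0 < J" "0 < L" using v0 unfolding valid_param_def by auto
  have mem: "lowU \<theta> P0 j l \<le> s" "s \<le> sigU2 \<theta> P0 j l" if "j < J" "l < L" for j l
    using sI that unfolding ident_set_def by auto
  have pdl: "sigU2 \<theta> P0 j l + 2 * sigUV \<theta> P0 j l * \<theta> + sigV2 \<theta> P0 j l * \<theta>\<^sup>2 > 0" if "j < J" "l < L" for j l
    using pd that by (intro pd_lin) auto
  have s0: "0 \<le> s"
  proof -
    have "0 \<le> (\<theta> * sigUV \<theta> P0 0 0 + sigU2 \<theta> P0 0 0)\<^sup>2 /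
        (sigV2 \<theta> P0 0 0 * \<theta>\<^sup>2 + 2 * sigUV \<theta> P0 0 0 * \<theta> + sigU2 \<theta> P0 0 0)"
      using pdl[OF JL] by (intro divide_nonneg_pos) (simp_all add: algebra_simps)
    also have "\<dots> \<le> lowU \<theta> P0 0 0" unfolding lowU_def by simp
    also have "\<dots> \<le> s" using mem JL by simp
    finally show ?thesis .
  qed
  show ?thesis
  proof (cases "\<theta> = 0")
    case True
    have "s = sU2 P0"
      using mem[OF JL] unfolding lowU_def sigU2_def True by simp
    then show ?thesis using v0 unfolding same_dist_def by blast
  next
    case False
    then have th2: "\<theta>\<^sup>2 > 0" by simp
    define d where "d = (sU2 P0 - s) / \<theta>\<^sup>2"
    have dth: "\<theta>\<^sup>2 * d = sU2 P0 - s" using th2 unfolding d_def by simp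
    define P where "P = P0\<lparr>sU2 := s, sV2 := \<lambda>j. sV2 P0 j - d, sUV := \<lambda>j. sUV P0 j + \<theta> * d,
                         se2 := \<lambda>l. se2 P0 l + d\<rparr>"
    have sig: "sigU2 \<theta> P j l = sigU2 \<theta> P0 j l" "sigUV \<theta> P j l = sigUV \<theta> P0 j l"
      "sigV2 \<theta> P j l = sigV2 \<theta> P0 j l" for j l
      using dth unfolding P_def sigU2_def sigUV_def sigV2_def by (simp_all add: algebra_simps)
    have sd: "same_dist \<theta> J L P J L P0"
      unfolding same_dist_def induced_prob_def sig by (simp add: P_def)
    have se: "0 \<le> se2 P l" if "l < L" for l
    proof -
      have "s \<le> sU2 P0 + \<theta>\<^sup>2 * se2 P0 l" using mem(2)[OF JL(1) that] unfolding sigU2_def .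
      then have "0 \<le> \<theta>\<^sup>2 * (se2 P0 l + d)" using dth by (simp add: algebra_simps)
      then show ?thesis using th2 by (simp add: P_def zero_le_mult_iff)
    qed
    have sv: "0 \<le> sV2 P j" if "j < J" for j
    proof -
      have "sigU2 \<theta> P0 j 0 - \<theta>\<^sup>2 * sigV2 \<theta> P0 j 0 \<le> s"
        using mem(1)[OF that JL(2)] unfolding lowU_def by simp
      then have "0 \<le> \<theta>\<^sup>2 * (sV2 P0 j - d)" using dth
        unfolding sigU2_def sigV2_def by (simp add: algebra_simps)
      then show ?thesis using th2 by (simp add: P_def zero_le_mult_iff)
    qed
    have suv: "(sUV P j)\<^sup>2 \<le> sU2 P * sV2 P j" if "j < J" for j
    proof (rule conv_alg[OF _ _ _ pdl[OF that JL(2)] _ False])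
      show "sigU2 \<theta> P0 j 0 = sU2 P + \<theta>\<^sup>2 * se2 P 0" using sig(1)[of j 0] unfolding sigU2_def by simp
      show "sigUV \<theta> P0 j 0 = sUV P j - \<theta> * se2 P 0" using sig(2)[of j 0] unfolding sigUV_def by simp
      show "sigV2 \<theta> P0 j 0 = sV2 P j + se2 P 0" using sig(3)[of j 0] unfolding sigV2_def by simp
      show "(\<theta> * sigUV \<theta> P0 j 0 + sigU2 \<theta> P0 j 0)\<^sup>2 /
          (sigV2 \<theta> P0 j 0 * \<theta>\<^sup>2 + 2 * sigUV \<theta> P0 j 0 * \<theta> + sigU2 \<theta> P0 j 0) \<le> sU2 P"
        using mem(1)[OF that JL(2)] unfolding lowU_def by (simp add: P_def)
    qed
    have "valid_param J L P"
      using v0 s0 se sv suv unfolding valid_param_def by (simp add: P_def)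
    then show ?thesis using sd by (auto simp: P_def)
  qed
qed


theorem proposition3:
  fixes \<theta> :: real and J L :: nat and P0 :: sparam
  assumes "valid_param J L P0"
    and "\<forall>j<J. \<forall>l<L. pos_def2 (sigU2 \<theta> P0 j l) (sigUV \<theta> P0 j l) (sigV2 \<theta> P0 j l)"
  shows "(\<forall>J' L' P. valid_param J' L' P \<and> same_dist \<theta> J' L' P J L P0
            \<longrightarrow> sU2 P \<in> ident_set \<theta> J L P0)
       \<and> (\<forall>s \<in> ident_set \<theta> J L P0. \<exists>P. valid_param J L P \<and> sU2 P = s
            \<and> (\<forall>j<J. pV P j = pV P0 j \<and> muV P j = muV P0 j)
            \<and> (\<forall>l<L. pe P l = pe P0 l \<and> mue P l = mue P0 l)
            \<and> same_dist \<theta> J L P J L P0)"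
  using part_i[OF assms] part_ii[OF assms] by blast

end
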